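(* Let $\mathfrak{M}$ denote the set of bounded non-negative measures on the unit circle $\mathbb{T}=\{e^{i\theta}:\theta\in(-\pi,\pi]\}$, and let $\delta$ be a metric on $\mathfrak{M}$. Then the following are equivalent: (i) for every $d\nu\in\mathfrak{M}$, with covariance sequence $c_k=\frac{1}{2\pi}\int_{-\pi}^{\pi}e^{-ik\theta}\,d\nu(\theta)$, $k=0,1,2,\dots$, and every sequence $\epsilon_n>0$ with $\epsilon_n\to 0$, one has $\rho_\delta(\mathcal{F}_{\mathbf{c}_{0:n},\epsilon_n})\to 0$ as $n\to\infty$; (ii) $\delta$ is weakly continuous.
   Context: For $\mathbf{c}_{0:n}=(c_0,\dots,c_n)$ and $\epsilon>0$, the uncertainty set is $\mathcal{F}_{\mathbf{c}_{0:n},\epsilon}=\{d\mu\in\mathfrak{M}: |c_k-\frac{1}{2\pi}\int_{-\pi}^{\pi}e^{-ik\theta}d\mu(\theta)|<\epsilon,\ k=0,1,\dots,n\}$. For a set $\mathcal{F}\subset\mathfrak{M}$, its diameter is $\rho_\delta(\mathcal{F})=\sup\{\delta(d\mu_0,d\mu_1): d\mu_0,d\mu_1\in\mathcal{F}\}$. The weak topology on $\mathfrak{M}$ is the one in which $d\mu_k\to d\mu$ iff $\int f\,d\mu_k\to\int f\,d\mu$ for every real-valued continuous function $f$ on $\mathbb{T}$; $\delta$ is called weakly continuous if $\delta:\mathfrak{M}\times\mathfrak{M}\to\mathbb{R}$ is continuous with respect to the weak topology (in particular $d\mu_k\to d\mu$ weakly implies $\delta(d\mu_k,d\mu)\to0$).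 *)

theory Defs
  imports "HOL-Analysis.Analysis"
begin

text \<open>The unit circle T as a subset of the complex plane; e^{i theta} is identified with z.\<close>
abbreviation circleT :: "complex set" where
  "circleT \<equiv> sphere 0 1"

definition Meas :: "complex measure set" where
  "Meas = {M. sets M = sets (restrict_space borel circleT) \<and> emeasure M (space M) \<noteq> \<infinity>}"

text \<open>Trigonometric moments: (1/2pi) int e^{-ik theta} d mu(theta), with e^{-ik theta} = (cnj z)^k.\<close>
definition moment :: "complex measure \<Rightarrow> nat \<Rightarrow> complex" where
  "moment M k = complex_of_real (1 / (2 * pi)) * (\<integral>z. (cnj z) ^ k \<partial>M)"

definition metric_on_Meas :: "(complex measure \<Rightarrow> complex measure \<Rightarrow> real) \<Rightarrow> bool" where
  "metric_on_Meas d \<longleftrightarrow>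
     (\<forall>a\<in>Meas. \<forall>b\<in>Meas. d a b = 0 \<longleftrightarrow> a = b) \<and>
     (\<forall>a\<in>Meas. \<forall>b\<in>Meas. d a b = d b a) \<and>
     (\<forall>a\<in>Meas. \<forall>b\<in>Meas. \<forall>c\<in>Meas. d a c \<le> d a b + d b c)"

definition uncert :: "(nat \<Rightarrow> complex) \<Rightarrow> nat \<Rightarrow> real \<Rightarrow> complex measure set" where
  "uncert c n \<epsilon> = {M \<in> Meas. \<forall>k\<le>n. cmod (c k - moment M k) < \<epsilon>}"

text \<open>Diameter, taken in the extended reals (so that an unbounded set has diameter infinity).\<close>
definition diam_delta :: "(complex measure \<Rightarrow> complex measure \<Rightarrow> real) \<Rightarrow> complex measure set \<Rightarrow> ereal" where
  "diam_delta d F = (SUP p \<in> F \<times> F. ereal (d (fst p) (snd p)))"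

definition weak_top :: "complex measure topology" where
  "weak_top = topology_generated_by
     {{M \<in> Meas. (\<integral>z. f z \<partial>M) \<in> U} | f U. continuous_on circleT f \<and> open (U :: real set)}"

definition weakly_continuous :: "(complex measure \<Rightarrow> complex measure \<Rightarrow> real) \<Rightarrow> bool" where
  "weakly_continuous d \<longleftrightarrow>
     continuous_map (prod_topology weak_top weak_top) euclideanreal (\<lambda>p. d (fst p) (snd p))"

end

theory Submission
  imports Defs
begin

lemma Meas_space: "M \<in> Meas \<Longrightarrow> space M = circleT"
proof -
  assume "M \<in> Meas"
  then have "sets M = sets (restrict_space borel circleT)" by (simp add: Meas_def)
  then have "space M = space (restrict_space borel circleT)" by (rule sets_eq_imp_space_eq)
  then show ?thesis by (simp add: space_restrict_space)
qed

lemma Meas_finite: "M \<in> Meas \<Longrightarrow> finite_measure M"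
  by (rule finite_measureI) (simp add: Meas_def)

lemma Meas_measurable:
  fixes f :: "complex \<Rightarrow> 'b::topological_space"
  assumes "M \<in> Meas" "continuous_on circleT f"
  shows "f \<in> borel_measurable M"
proof -
  have "f \<in> borel_measurable (restrict_space borel circleT)"
    by (rule borel_measurable_continuous_on_restrict[OF assms(2)])
  moreover have "sets M = sets (restrict_space borel circleT)" using assms(1) by (simp add: Meas_def)
  ultimately show ?thesis using measurable_cong_sets[of M "restrict_space borel circleT" borel borel] by simp
qed

lemma Meas_integrable:
  fixes f :: "complex \<Rightarrow> 'b::{banach,second_countable_topology}"
  assumes "M \<in> Meas" "continuous_on circleT f"
  shows "integrable M f"
proof -
  have "compact (f ` circleT)" by (rule compact_continuous_image[OF assms(2)]) simp
  then obtain B where B: "\<And>x. x \<in> circleT \<Longrightarrow> norm (f x) \<le> B"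
    using compact_imp_bounded bounded_iff by (metis image_eqI)
  interpret finite_measure M by (rule Meas_finite[OF assms(1)])
  show ?thesis
    by (rule integrable_const_bound[where B=B]) (use B Meas_space[OF assms(1)] Meas_measurable[OF assms] in auto)
qed

inductive_set TP :: "(complex \<Rightarrow> complex) set" where
  pw: "(\<lambda>z. z ^ k) \<in> TP"
| cpw: "(\<lambda>z. cnj z ^ k) \<in> TP"
| add: "f \<in> TP \<Longrightarrow> g \<in> TP \<Longrightarrow> (\<lambda>z. f z + g z) \<in> TP"
| smul: "f \<in> TP \<Longrightarrow> (\<lambda>z. c * f z) \<in> TP"
| cong: "f \<in> TP \<Longrightarrow> (\<And>z. z \<in> circleT \<Longrightarrow> g z = f z) \<Longrightarrow> g \<in> TP"

lemma circ_mult_cnj: "z \<in> circleT \<Longrightarrow> z * cnj z = 1"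
  by (simp add: complex_norm_square[symmetric])

lemma TP_pw_cpw: "(\<lambda>z. z ^ j * cnj z ^ k) \<in> TP"
proof (cases "k \<le> j")
  case True
  show ?thesis
  proof (rule TP.cong[OF TP.pw[of "j - k"]])
    fix z :: complex assume z: "z \<in> circleT"
    have "z ^ j * cnj z ^ k = z ^ (j - k) * (z * cnj z) ^ k"
      using True by (simp add: power_mult_distrib power_add[symmetric])
    then show "z ^ j * cnj z ^ k = z ^ (j - k)" using circ_mult_cnj[OF z] by simp
  qed
next
  case False
  show ?thesis
  proof (rule TP.cong[OF TP.cpw[of "k - j"]])
    fix z :: complex assume z: "z \<in> circleT"
    have "z ^ j * cnj z ^ k = cnj z ^ (k - j) * (z * cnj z) ^ j"
      using False by (simp add: power_mult_distrib power_add[symmetric] mult_ac)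
    then show "z ^ j * cnj z ^ k = cnj z ^ (k - j)" using circ_mult_cnj[OF z] by simp
  qed
qed

lemma TP_mult_pw: "g \<in> TP \<Longrightarrow> (\<lambda>z. z ^ j * g z) \<in> TP"
proof (induction g rule: TP.induct)
  case (pw k) show ?case by (rule TP.cong[OF TP.pw[of "j+k"]]) (simp add: power_add)
next
  case (cpw k) show ?case by (rule TP_pw_cpw)
next
  case (add f g) then show ?case using TP.add[OF add.IH] by (simp add: distrib_left)
next
  case (smul f c) then show ?case using TP.smul[OF smul.IH, of c] by (simp add: mult_ac)
next
  case (cong f g) then show ?case by (intro TP.cong[OF cong.IH]) simp
qed

lemma TP_mult_cpw: "g \<in> TP \<Longrightarrow> (\<lambda>z. cnj z ^ j * g z) \<in> TP"
proof (induction g rule: TP.induct)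
  case (pw k) show ?case using TP_pw_cpw[of k j] by (simp add: mult_ac)
next
  case (cpw k) show ?case by (rule TP.cong[OF TP.cpw[of "j+k"]]) (simp add: power_add)
next
  case (add f g) then show ?case using TP.add[OF add.IH] by (simp add: distrib_left)
next
  case (smul f c) then show ?case using TP.smul[OF smul.IH, of c] by (simp add: mult_ac)
next
  case (cong f g) then show ?case by (intro TP.cong[OF cong.IH]) simp
qed

lemma TP_mult: "f \<in> TP \<Longrightarrow> g \<in> TP \<Longrightarrow> (\<lambda>z. f z * g z) \<in> TP"
proof (induction f rule: TP.induct)
  case (pw k) then show ?case by (rule TP_mult_pw)
next
  case (cpw k) then show ?case by (rule TP_mult_cpw)
next
  case (add f1 f2)
  from TP.add[OF add.IH(1)[OF add.prems] add.IH(2)[OF add.prems]]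
  show ?case by (simp add: distrib_right)
next
  case (smul f c)
  from TP.smul[OF smul.IH[OF smul.prems], of c] show ?case by (simp add: mult.assoc)
next
  case (cong f h)
  show ?case by (rule TP.cong[OF cong.IH[OF cong.prems]]) (simp add: cong.hyps(2))
qed

lemma TP_const: "(\<lambda>z. c) \<in> TP"
  using TP.smul[OF TP.pw[of 0], of c] by simp

lemma TP_Re: "(\<lambda>z. complex_of_real (Re z)) \<in> TP"
proof -
  have "(\<lambda>z. (1/2) * (z ^ 1 + cnj z ^ 1)) \<in> TP" by (intro TP.smul TP.add TP.pw TP.cpw)
  then show ?thesis by (simp add: complex_add_cnj)
qed

lemma TP_Im: "(\<lambda>z. complex_of_real (Im z)) \<in> TP"
proof -
  have "(\<lambda>z. (1/(2*\<i>)) * (z ^ 1 + (-1) * cnj z ^ 1)) \<in> TP" by (intro TP.smul TP.add TP.pw TP.cpw)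
  moreover have "(1/(2*\<i>)) * (z ^ 1 + (-1) * cnj z ^ 1) = complex_of_real (Im z)" for z
    using complex_diff_cnj[of z] by (simp add: field_simps)
  ultimately show ?thesis by simp
qed

lemma TP_poly: "real_polynomial_function g \<Longrightarrow> (\<lambda>z. complex_of_real (g (z::complex))) \<in> TP"
proof (induction g rule: real_polynomial_function.induct)
  case (linear f)
  interpret bounded_linear f by fact
  have eqn: "f z = Re z * f 1 + Im z * f \<i>" for z
  proof -
    have "Re z *\<^sub>R 1 + Im z *\<^sub>R \<i> = z" by (simp add: complex_eq_iff)
    then have "f z = f (Re z *\<^sub>R 1 + Im z *\<^sub>R \<i>)" by simp
    also have "\<dots> = Re z *\<^sub>R f 1 + Im z *\<^sub>R f \<i>" by (simp only: add scale)
    finally show ?thesis by simp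
  qed
  have T: "(\<lambda>z. complex_of_real (f 1) * complex_of_real (Re z) + complex_of_real (f \<i>) * complex_of_real (Im z)) \<in> TP"
    by (intro TP.add TP.smul TP_Re TP_Im)
  have E: "(\<lambda>z. complex_of_real (f z)) = (\<lambda>z. complex_of_real (f 1) * complex_of_real (Re z) + complex_of_real (f \<i>) * complex_of_real (Im z))"
  proof
    fix z show "complex_of_real (f z) = complex_of_real (f 1) * complex_of_real (Re z) + complex_of_real (f \<i>) * complex_of_real (Im z)"
      by (subst eqn[of z]) (simp add: mult.commute)
  qed
  show ?case unfolding E by (rule T)
next
  case (const c) then show ?case by (rule TP_const)
next
  case (add f g) then show ?case using TP.add[OF add.IH] by simp
next
  case (mult f g) then show ?case using TP_mult[OF mult.IH] by simp
qed

definition Dm :: "nat \<Rightarrow> complex measure \<Rightarrow> complex measure \<Rightarrow> real" where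
  "Dm n M M' = (\<Sum>k\<le>n. cmod (moment M k - moment M' k))"

lemma Dm_mono: "n \<le> m \<Longrightarrow> Dm n M M' \<le> Dm m M M'"
  unfolding Dm_def by (rule sum_mono2) auto

lemma Dm_nonneg: "0 \<le> Dm n M M'"
  unfolding Dm_def by (rule sum_nonneg) auto

lemma Dm_ge: "k \<le> n \<Longrightarrow> cmod (moment M k - moment M' k) \<le> Dm n M M'"
  unfolding Dm_def by (rule member_le_sum) auto

lemma int_cpw: "(\<integral>z. cnj z ^ k \<partial>M) = complex_of_real (2*pi) * moment M k"
  by (simp add: moment_def)

lemma TP_int:
  "h \<in> TP \<Longrightarrow> (\<forall>M\<in>Meas. integrable M h) \<and>
     (\<exists>n C. 0 \<le> C \<and> (\<forall>M\<in>Meas. \<forall>M'\<in>Meas. cmod ((\<integral>z. h z \<partial>M) - (\<integral>z. h z \<partial>M')) \<le> C * Dm n M M'))"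
proof (induction h rule: TP.induct)
  case (pw k)
  have "continuous_on circleT (\<lambda>z::complex. z ^ k)" by (intro continuous_intros)
  then have i: "\<forall>M\<in>Meas. integrable M (\<lambda>z. z ^ k)"
    using Meas_integrable by blast
  have e: "(\<integral>z. z ^ k \<partial>M) = cnj (complex_of_real (2*pi) * moment M k)" for M
  proof -
    have "(\<integral>z. z ^ k \<partial>M) = (\<integral>z. cnj (cnj z ^ k) \<partial>M)" by simp
    also have "\<dots> = cnj (\<integral>z. cnj z ^ k \<partial>M)" by (simp only: Bochner_Integration.integral_cnj)
    finally show ?thesis by (simp only: int_cpw)
  qed
  have "cmod ((\<integral>z. z ^ k \<partial>M) - (\<integral>z. z ^ k \<partial>M')) \<le> (2*pi) * Dm k M M'" for M M'
  proof -
    have "cmod ((\<integral>z. z ^ k \<partial>M) - (\<integral>z. z ^ k \<partial>M')) = cmod (cnj (complex_of_real (2*pi) * (moment M k - moment M' k)))"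
      unfolding e by (simp add: algebra_simps)
    also have "\<dots> = 2*pi * cmod (moment M k - moment M' k)"
      by (simp only: complex_mod_cnj norm_mult) simp
    also have "\<dots> \<le> 2*pi * Dm k M M'" by (intro mult_left_mono Dm_ge) auto
    finally show ?thesis .
  qed
  then show ?case using i by (intro conjI exI[of _ k] exI[of _ "2*pi"]) auto
next
  case (cpw k)
  have "continuous_on circleT (\<lambda>z::complex. cnj z ^ k)" by (intro continuous_intros)
  then have i: "\<forall>M\<in>Meas. integrable M (\<lambda>z. cnj z ^ k)"
    using Meas_integrable by blast
  have "cmod ((\<integral>z. cnj z ^ k \<partial>M) - (\<integral>z. cnj z ^ k \<partial>M')) \<le> (2*pi) * Dm k M M'" for M M'
  proof -
    have "cmod ((\<integral>z. cnj z ^ k \<partial>M) - (\<integral>z. cnj z ^ k \<partial>M')) = cmod (complex_of_real (2*pi) * (moment M k - moment M' k))"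
      unfolding int_cpw by (simp add: algebra_simps)
    also have "\<dots> = 2*pi * cmod (moment M k - moment M' k)"
      by (simp only: norm_mult) simp
    also have "\<dots> \<le> 2*pi * Dm k M M'" by (intro mult_left_mono Dm_ge) auto
    finally show ?thesis .
  qed
  then show ?case using i by (intro conjI exI[of _ k] exI[of _ "2*pi"]) auto
next
  case (add f g)
  then obtain n1 C1 n2 C2 where c1: "0 \<le> C1" "\<forall>M\<in>Meas. \<forall>M'\<in>Meas. cmod ((\<integral>z. f z \<partial>M) - (\<integral>z. f z \<partial>M')) \<le> C1 * Dm n1 M M'"
    and c2: "0 \<le> C2" "\<forall>M\<in>Meas. \<forall>M'\<in>Meas. cmod ((\<integral>z. g z \<partial>M) - (\<integral>z. g z \<partial>M')) \<le> C2 * Dm n2 M M'"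
    and i1: "\<forall>M\<in>Meas. integrable M f" and i2: "\<forall>M\<in>Meas. integrable M g" by blast
  have "cmod ((\<integral>z. f z + g z \<partial>M) - (\<integral>z. f z + g z \<partial>M')) \<le> (C1 + C2) * Dm (max n1 n2) M M'"
    if M: "M \<in> Meas" "M' \<in> Meas" for M M'
  proof -
    have "cmod ((\<integral>z. f z + g z \<partial>M) - (\<integral>z. f z + g z \<partial>M'))
        = cmod (((\<integral>z. f z \<partial>M) - (\<integral>z. f z \<partial>M')) + ((\<integral>z. g z \<partial>M) - (\<integral>z. g z \<partial>M')))"
      using i1 i2 M by (simp add: integral_add algebra_simps)
    also have "\<dots> \<le> C1 * Dm n1 M M' + C2 * Dm n2 M M'"
      using c1(2) c2(2) M by (smt (verit) norm_triangle_ineq)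
    also have "\<dots> \<le> C1 * Dm (max n1 n2) M M' + C2 * Dm (max n1 n2) M M'"
      using c1(1) c2(1) by (intro add_mono mult_left_mono Dm_mono) auto
    finally show ?thesis by (simp add: distrib_right)
  qed
  then show ?case using i1 i2 c1 c2 by (intro conjI exI[of _ "max n1 n2"] exI[of _ "C1+C2"]) auto
next
  case (smul f c)
  then obtain n C where cc: "0 \<le> C" "\<forall>M\<in>Meas. \<forall>M'\<in>Meas. cmod ((\<integral>z. f z \<partial>M) - (\<integral>z. f z \<partial>M')) \<le> C * Dm n M M'"
    and i: "\<forall>M\<in>Meas. integrable M f" by blast
  have "cmod ((\<integral>z. c * f z \<partial>M) - (\<integral>z. c * f z \<partial>M')) \<le> (cmod c * C) * Dm n M M'"
    if M: "M \<in> Meas" "M' \<in> Meas" for M M'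
  proof -
    have "cmod ((\<integral>z. c * f z \<partial>M) - (\<integral>z. c * f z \<partial>M')) = cmod c * cmod ((\<integral>z. f z \<partial>M) - (\<integral>z. f z \<partial>M'))"
      by (simp add: right_diff_distrib[symmetric] norm_mult)
    also have "\<dots> \<le> cmod c * (C * Dm n M M')" using cc M by (intro mult_left_mono) auto
    finally show ?thesis by (simp add: mult_ac)
  qed
  then show ?case using i cc by (intro conjI exI[of _ n] exI[of _ "cmod c * C"]) auto
next
  case (cong f g)
  have eq: "M \<in> Meas \<Longrightarrow> (\<integral>z. g z \<partial>M) = (\<integral>z. f z \<partial>M)" for M
    using cong.hyps(2) by (intro Bochner_Integration.integral_cong) (auto simp: Meas_space)
  have "integrable M g" if M: "M \<in> Meas" for M
  proof -
    have "integrable M f" using cong.IH M by auto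
    moreover have "integrable M f \<longleftrightarrow> integrable M g"
      by (rule Bochner_Integration.integrable_cong) (use cong.hyps(2) M in \<open>auto simp: Meas_space\<close>)
    ultimately show ?thesis by simp
  qed
  then show ?case using cong.IH eq by auto
qed

lemma moment0: "cmod (moment M 0) = measure M (space M) / (2*pi)"
proof -
  have "moment M 0 = complex_of_real (1/(2*pi) * measure M (space M))"
    unfolding moment_def by (simp add: scaleR_conv_of_real)
  then show ?thesis by (simp only: norm_of_real) simp
qed

lemma approx_int:
  fixes f g :: "complex \<Rightarrow> real"
  assumes M: "M \<in> Meas" and f: "continuous_on circleT f" and g: "continuous_on circleT g"
    and fg: "\<And>z. z \<in> circleT \<Longrightarrow> \<bar>f z - g z\<bar> \<le> e"
  shows "\<bar>(\<integral>z. f z \<partial>M) - (\<integral>z. g z \<partial>M)\<bar> \<le> e * measure M (space M)"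
proof -
  interpret finite_measure M by (rule Meas_finite[OF M])
  have i: "integrable M f" "integrable M g" using Meas_integrable[OF M] f g by auto
  have "\<bar>(\<integral>z. f z \<partial>M) - (\<integral>z. g z \<partial>M)\<bar> = \<bar>\<integral>z. f z - g z \<partial>M\<bar>"
    using i by simp
  also have "\<dots> \<le> (\<integral>z. \<bar>f z - g z\<bar> \<partial>M)"
    using integral_norm_bound[of M "\<lambda>z. f z - g z"] by simp
  also have "\<dots> \<le> (\<integral>z. e \<partial>M)"
    using i fg by (intro integral_mono) (auto simp: Meas_space[OF M])
  also have "\<dots> = e * measure M (space M)" by simp
  finally show ?thesis .
qed

lemma aux_cancel: "(x::real) \<noteq> 0 \<Longrightarrow> x * (r / (a * x)) = r / a"
  by (simp add: mult.commute[of a x])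

lemma lemmaB:
  fixes f :: "complex \<Rightarrow> real"
  assumes f: "continuous_on circleT f" and nu: "\<nu> \<in> Meas" and r: "0 < r"
  shows "\<exists>n \<epsilon>. 0 < \<epsilon> \<and> (\<forall>M \<in> uncert (moment \<nu>) n \<epsilon>. \<bar>(\<integral>z. f z \<partial>M) - (\<integral>z. f z \<partial>\<nu>)\<bar> < r)"
proof -
  define Bm where "Bm = 2*pi*(cmod (moment \<nu> 0) + 1)"
  have Bm0: "0 \<le> Bm" unfolding Bm_def by simp
  define e where "e = r / (4 * (Bm + 1))"
  have e0: "0 < e" unfolding e_def using r Bm0 by simp
  have eB: "e * Bm < r / 4"
  proof -
    have "e * Bm < e * (Bm + 1)" using e0 by simp
    also have "\<dots> = r / 4"
    proof -
      have "Bm + 1 \<noteq> 0" "4 * Bm + 4 \<noteq> 0" using Bm0 by auto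
      then show ?thesis unfolding e_def by (simp add: field_simps)
    qed
    finally show ?thesis .
  qed
  obtain g where g: "real_polynomial_function g" "\<And>z. z \<in> circleT \<Longrightarrow> \<bar>f z - g z\<bar> < e"
    using Stone_Weierstrass_real_polynomial_function[OF compact_sphere f e0] by blast
  have gc: "continuous_on circleT g"
    using g(1) continuous_on_polymonial_function real_polynomial_function_eq by blast
  obtain n C where C: "0 \<le> C" "\<forall>M\<in>Meas. \<forall>M'\<in>Meas.
      cmod ((\<integral>z. complex_of_real (g z) \<partial>M) - (\<integral>z. complex_of_real (g z) \<partial>M')) \<le> C * Dm n M M'"
    using TP_int[OF TP_poly[OF g(1)]] by blast
  define \<epsilon> where "\<epsilon> = min 1 (r / (4 * (C + 1) * (real n + 1)))"
  have \<epsilon>0: "0 < \<epsilon>" unfolding \<epsilon>_def using r C by simp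
  have mass: "measure M (space M) \<le> Bm" if "M \<in> uncert (moment \<nu>) n \<epsilon>" for M
  proof -
    have "cmod (moment \<nu> 0 - moment M 0) < \<epsilon>" using that by (simp add: uncert_def)
    moreover have "\<epsilon> \<le> 1" by (simp add: \<epsilon>_def)
    moreover have "cmod (moment M 0) \<le> cmod (moment \<nu> 0) + cmod (moment M 0 - moment \<nu> 0)"
      by (rule norm_triangle_sub)
    moreover have "cmod (moment M 0 - moment \<nu> 0) = cmod (moment \<nu> 0 - moment M 0)"
      by (rule norm_minus_commute)
    ultimately have "cmod (moment M 0) \<le> cmod (moment \<nu> 0) + 1" by linarith
    then have h: "measure M (space M)/(2*pi) \<le> cmod (moment \<nu> 0) + 1" by (simp only: moment0)
    have "measure M (space M) = 2*pi*(measure M (space M)/(2*pi))" by simp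
    also have "\<dots> \<le> 2*pi*(cmod (moment \<nu> 0)+1)" using h by (intro mult_left_mono) auto
    finally show ?thesis unfolding Bm_def .
  qed
  have "\<bar>(\<integral>z. f z \<partial>M) - (\<integral>z. f z \<partial>\<nu>)\<bar> < r" if M: "M \<in> uncert (moment \<nu>) n \<epsilon>" for M
  proof -
    have MM: "M \<in> Meas" using M by (simp add: uncert_def)
    have nuu: "\<nu> \<in> uncert (moment \<nu>) n \<epsilon>" using nu \<epsilon>0 by (simp add: uncert_def)
    have fgl: "\<And>z. z \<in> circleT \<Longrightarrow> \<bar>f z - g z\<bar> \<le> e" using g(2) by (simp add: less_imp_le)
    have a1: "\<bar>(\<integral>z. f z \<partial>M) - (\<integral>z. g z \<partial>M)\<bar> \<le> e * Bm"
      using order_trans[OF approx_int[OF MM f gc fgl] mult_left_mono[OF mass[OF M]]] e0 by simp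
    have a3: "\<bar>(\<integral>z. f z \<partial>\<nu>) - (\<integral>z. g z \<partial>\<nu>)\<bar> \<le> e * Bm"
      using order_trans[OF approx_int[OF nu f gc fgl] mult_left_mono[OF mass[OF nuu]]] e0 by simp
    have D: "Dm n M \<nu> \<le> (real n + 1) * \<epsilon>"
    proof -
      have "Dm n M \<nu> \<le> (\<Sum>k\<le>n. \<epsilon>)" unfolding Dm_def
        using M by (intro sum_mono) (auto simp: uncert_def norm_minus_commute less_imp_le)
      then show ?thesis by (simp add: add.commute)
    qed
    have "(real n + 1) * \<epsilon> \<le> (real n + 1) * (r / (4 * (C + 1) * (real n + 1)))"
      unfolding \<epsilon>_def by (intro mult_left_mono) auto
    also have "\<dots> = r / (4 * (C + 1))" by (rule aux_cancel) simp
    finally have D2: "Dm n M \<nu> \<le> r / (4 * (C + 1))" using D by linarith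
    have "C * Dm n M \<nu> \<le> (C + 1) * (r / (4 * (C + 1)))"
      using C(1) D2 Dm_nonneg[of n M \<nu>] by (intro mult_mono) auto
    also have "\<dots> = r / 4" using C(1) by (simp add: field_simps)
    finally have CD: "C * Dm n M \<nu> \<le> r / 4" .
    have "\<bar>(\<integral>z. g z \<partial>M) - (\<integral>z. g z \<partial>\<nu>)\<bar> = cmod ((\<integral>z. complex_of_real (g z) \<partial>M) - (\<integral>z. complex_of_real (g z) \<partial>\<nu>))"
      by (simp flip: of_real_diff)
    also have "\<dots> \<le> C * Dm n M \<nu>" by (rule C(2)[rule_format, OF MM nu])
    finally have a2: "\<bar>(\<integral>z. g z \<partial>M) - (\<integral>z. g z \<partial>\<nu>)\<bar> \<le> r / 4" using CD by linarith
    show ?thesis using a1 a2 a3 eB by linarith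
  qed
  then show ?thesis using \<epsilon>0 by blast
qed

definition SB :: "complex measure set set" where
  "SB = {{M \<in> Meas. (\<integral>z. f z \<partial>M) \<in> U} | f U. continuous_on circleT f \<and> open (U :: real set)}"

lemma weak_top_SB: "weak_top = topology_generated_by SB"
  unfolding weak_top_def SB_def ..

lemma topspace_weak: "topspace weak_top = Meas"
proof -
  have "Meas \<in> SB" unfolding SB_def
    by (rule CollectI, rule exI[of _ "\<lambda>_::complex. 0::real"], rule exI[of _ UNIV]) auto
  moreover have "\<Union>SB \<subseteq> Meas" unfolding SB_def by auto
  ultimately have "\<Union>SB = Meas" by blast
  then show ?thesis unfolding weak_top_SB by simp
qed

lemma openin_weak_basis:
  assumes "continuous_on circleT f" "open (U :: real set)"
  shows "openin weak_top {M \<in> Meas. (\<integral>z. f z \<partial>M) \<in> U}"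
proof -
  have "{M \<in> Meas. (\<integral>z. f z \<partial>M) \<in> U} \<in> SB" unfolding SB_def
    by (rule CollectI, rule exI[of _ f], rule exI[of _ U]) (simp add: assms)
  then show ?thesis unfolding weak_top_SB openin_topology_generated_by_iff
    by (rule generate_topology_on.Basis)
qed

lemma uncert_mono:
  assumes "n \<le> n'" "\<epsilon>' \<le> \<epsilon>" shows "uncert c n' \<epsilon>' \<subseteq> uncert c n \<epsilon>"
proof
  fix M assume "M \<in> uncert c n' \<epsilon>'"
  then have M: "M \<in> Meas" "\<And>k. k \<le> n' \<Longrightarrow> cmod (c k - moment M k) < \<epsilon>'" by (auto simp: uncert_def)
  have "cmod (c k - moment M k) < \<epsilon>" if "k \<le> n" for k
  proof -
    have "k \<le> n'" using that assms(1) by simp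
    then show ?thesis using M(2)[of k] assms(2) by simp
  qed
  then show "M \<in> uncert c n \<epsilon>" using M(1) by (simp add: uncert_def)
qed

lemma uncert_self: "\<nu> \<in> Meas \<Longrightarrow> 0 < \<epsilon> \<Longrightarrow> \<nu> \<in> uncert (moment \<nu>) n \<epsilon>"
  unfolding uncert_def by simp

lemma uncert_Meas: "M \<in> uncert c n \<epsilon> \<Longrightarrow> M \<in> Meas"
  unfolding uncert_def by simp

lemma lemmaA:
  assumes "openin weak_top U" "\<nu> \<in> U"
  shows "\<exists>n \<epsilon>. 0 < \<epsilon> \<and> uncert (moment \<nu>) n \<epsilon> \<subseteq> U"
proof -
  have "generate_topology_on SB U"
    using assms(1) unfolding weak_top_SB openin_topology_generated_by_iff .
  then show ?thesis using assms(2)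
  proof (induction arbitrary: \<nu> rule: generate_topology_on.induct)
    case Empty then show ?case by simp
  next
    case (Int a b)
    have "\<nu> \<in> a" "\<nu> \<in> b" using Int.prems by auto
    obtain n1 e1 where 1: "0 < e1" "uncert (moment \<nu>) n1 e1 \<subseteq> a" using Int.IH(1)[OF \<open>\<nu> \<in> a\<close>] by blast
    obtain n2 e2 where 2: "0 < e2" "uncert (moment \<nu>) n2 e2 \<subseteq> b" using Int.IH(2)[OF \<open>\<nu> \<in> b\<close>] by blast
    have "uncert (moment \<nu>) (max n1 n2) (min e1 e2) \<subseteq> a"
      using 1 uncert_mono[of n1 "max n1 n2" "min e1 e2" e1] by auto
    moreover have "uncert (moment \<nu>) (max n1 n2) (min e1 e2) \<subseteq> b"
      using 2 uncert_mono[of n2 "max n1 n2" "min e1 e2" e2] by auto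
    ultimately show ?case using 1 2 by (intro exI[of _ "max n1 n2"] exI[of _ "min e1 e2"]) auto
  next
    case (UN K)
    from UN.prems obtain k where k: "k \<in> K" "\<nu> \<in> k" by blast
    obtain n e where "0 < e" "uncert (moment \<nu>) n e \<subseteq> k" using UN.IH[OF k] by blast
    then show ?case using k by blast
  next
    case (Basis s)
    have "\<exists>f U'. s = {M \<in> Meas. (\<integral>z. f z \<partial>M) \<in> U'} \<and> continuous_on circleT f \<and> open (U' :: real set)"
      using Basis.hyps unfolding SB_def by (simp only: mem_Collect_eq)
    then obtain f U' where s: "s = {M \<in> Meas. (\<integral>z. f z \<partial>M) \<in> U'}" "continuous_on circleT f" "open (U' :: real set)"
      by blast
    have nu: "\<nu> \<in> Meas" "(\<integral>z. f z \<partial>\<nu>) \<in> U'" using Basis.prems unfolding s(1) by simp_all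
    obtain r where r: "0 < r" "ball (\<integral>z. f z \<partial>\<nu>) r \<subseteq> U'"
      by (rule openE[OF s(3) nu(2)])
    obtain n e where ne: "0 < e" "\<forall>M \<in> uncert (moment \<nu>) n e. \<bar>(\<integral>z. f z \<partial>M) - (\<integral>z. f z \<partial>\<nu>)\<bar> < r"
      using lemmaB[OF s(2) nu(1) r(1)] by blast
    have "uncert (moment \<nu>) n e \<subseteq> s"
    proof
      fix M assume M: "M \<in> uncert (moment \<nu>) n e"
      then have "\<bar>(\<integral>z. f z \<partial>M) - (\<integral>z. f z \<partial>\<nu>)\<bar> < r" using ne(2) by blast
      then have "(\<integral>z. f z \<partial>M) \<in> ball (\<integral>z. f z \<partial>\<nu>) r" by (simp add: dist_real_def abs_minus_commute)
      then have "(\<integral>z. f z \<partial>M) \<in> U'" using r(2) by (rule subsetD[rotated])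
      then show "M \<in> s" using uncert_Meas[OF M] unfolding s(1) by simp
    qed
    then show ?case using ne(1) by blast
  qed
qed

lemma lemmaC1:
  assumes mu: "\<mu> \<in> Meas" and e: "0 < \<epsilon>"
  shows "\<exists>W. openin weak_top W \<and> \<mu> \<in> W \<and> (\<forall>M\<in>W. M \<in> Meas \<and> cmod (moment \<mu> k - moment M k) < \<epsilon>)"
proof -
  define fr where "fr = (\<lambda>z::complex. Re (cnj z ^ k))"
  define fi where "fi = (\<lambda>z::complex. Im (cnj z ^ k))"
  define a where "a = (\<integral>z. fr z \<partial>\<mu>)"
  define b where "b = (\<integral>z. fi z \<partial>\<mu>)"
  define W where "W = {M \<in> Meas. (\<integral>z. fr z \<partial>M) \<in> ball a (pi*\<epsilon>)} \<inter> {M \<in> Meas. (\<integral>z. fi z \<partial>M) \<in> ball b (pi*\<epsilon>)}"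
  have cfr: "continuous_on circleT fr" unfolding fr_def by (intro continuous_intros)
  have cfi: "continuous_on circleT fi" unfolding fi_def by (intro continuous_intros)
  have "openin weak_top W" unfolding W_def
    by (intro openin_Int openin_weak_basis cfr cfi open_ball)
  moreover have "\<mu> \<in> W" unfolding W_def a_def b_def using mu e by simp
  moreover have "M \<in> Meas \<and> cmod (moment \<mu> k - moment M k) < \<epsilon>" if M: "M \<in> W" for M
  proof -
    define I where "I = (\<lambda>N. (\<integral>z. cnj z ^ k \<partial>N))"
    have cc: "continuous_on circleT (\<lambda>z::complex. cnj z ^ k)" by (intro continuous_intros)
    have ReI: "Re (I N) = (\<integral>z. fr z \<partial>N)" if "N \<in> Meas" for N unfolding I_def fr_def
      using integral_Re[OF Meas_integrable[OF that cc]] by simp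
    have ImI: "Im (I N) = (\<integral>z. fi z \<partial>N)" if "N \<in> Meas" for N unfolding I_def fi_def
      using integral_Im[OF Meas_integrable[OF that cc]] by simp
    have MM: "M \<in> Meas" using M unfolding W_def by simp
    have "cmod (moment \<mu> k - moment M k) = \<bar>1/(2*pi)\<bar> * cmod (I \<mu> - I M)"
      unfolding moment_def I_def by (simp only: right_diff_distrib[symmetric] norm_mult norm_of_real)
    also have "\<dots> = cmod (I \<mu> - I M) / (2*pi)" by simp
    also have "\<dots> \<le> (\<bar>Re (I \<mu> - I M)\<bar> + \<bar>Im (I \<mu> - I M)\<bar>) / (2*pi)"
      by (intro divide_right_mono cmod_le) simp
    also have "\<dots> < (pi*\<epsilon> + pi*\<epsilon>) / (2*pi)"
    proof -
      have "\<bar>Re (I \<mu> - I M)\<bar> < pi*\<epsilon>" using M unfolding W_def a_def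
        by (simp add: ReI[OF mu] ReI[OF MM] dist_real_def)
      moreover have "\<bar>Im (I \<mu> - I M)\<bar> < pi*\<epsilon>" using M unfolding W_def b_def
        by (simp add: ImI[OF mu] ImI[OF MM] dist_real_def)
      ultimately show ?thesis by (intro divide_strict_right_mono) auto
    qed
    also have "\<dots> = \<epsilon>" by simp
    finally show ?thesis using M unfolding W_def by simp
  qed
  ultimately show ?thesis by blast
qed

lemma lemmaC:
  assumes mu: "\<mu> \<in> Meas" and e: "0 < \<epsilon>"
  shows "\<exists>W. openin weak_top W \<and> \<mu> \<in> W \<and> W \<subseteq> uncert (moment \<mu>) n \<epsilon>"
proof (induction n)
  case 0
  obtain W where W: "openin weak_top W" "\<mu> \<in> W" "\<forall>M\<in>W. M \<in> Meas \<and> cmod (moment \<mu> 0 - moment M 0) < \<epsilon>"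
    using lemmaC1[OF mu e] by blast
  then show ?case by (intro exI[of _ W]) (auto simp: uncert_def)
next
  case (Suc n)
  then obtain W1 where W1: "openin weak_top W1" "\<mu> \<in> W1" "W1 \<subseteq> uncert (moment \<mu>) n \<epsilon>" by blast
  obtain W2 where W2: "openin weak_top W2" "\<mu> \<in> W2" "\<forall>M\<in>W2. M \<in> Meas \<and> cmod (moment \<mu> (Suc n) - moment M (Suc n)) < \<epsilon>"
    using lemmaC1[OF mu e] by blast
  have "W1 \<inter> W2 \<subseteq> uncert (moment \<mu>) (Suc n) \<epsilon>"
  proof
    fix M assume M: "M \<in> W1 \<inter> W2"
    then have "M \<in> uncert (moment \<mu>) n \<epsilon>" using W1(3) by blast
    then show "M \<in> uncert (moment \<mu>) (Suc n) \<epsilon>" using W2(3) M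
      unfolding uncert_def by (auto simp: le_Suc_eq)
  qed
  then show ?case using W1 W2 by (intro exI[of _ "W1 \<inter> W2"]) (auto intro: openin_Int)
qed

lemma diam_upper: "a \<in> F \<Longrightarrow> b \<in> F \<Longrightarrow> ereal (d a b) \<le> diam_delta d F"
  unfolding diam_delta_def using SUP_upper[of "(a,b)" "F \<times> F" "\<lambda>p. ereal (d (fst p) (snd p))"] by simp

lemma diam_least: "(\<And>a b. a \<in> F \<Longrightarrow> b \<in> F \<Longrightarrow> d a b \<le> \<eta>) \<Longrightarrow> diam_delta d F \<le> ereal \<eta>"
  unfolding diam_delta_def by (rule SUP_least) auto

lemma diam_mono: "F \<subseteq> G \<Longrightarrow> diam_delta d F \<le> diam_delta d G"
  unfolding diam_delta_def by (rule SUP_subset_mono) auto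

lemma mf1: "metric_on_Meas \<delta> \<Longrightarrow> a \<in> Meas \<Longrightarrow> \<delta> a a = 0"
  unfolding metric_on_Meas_def by (drule conjunct1) (drule bspec, assumption, drule bspec, assumption, simp)
lemma mf2: "metric_on_Meas \<delta> \<Longrightarrow> a \<in> Meas \<Longrightarrow> b \<in> Meas \<Longrightarrow> \<delta> a b = \<delta> b a"
  unfolding metric_on_Meas_def by (drule conjunct2, drule conjunct1) (drule bspec, assumption, drule bspec, assumption, simp)
lemma mf3: "metric_on_Meas \<delta> \<Longrightarrow> a \<in> Meas \<Longrightarrow> b \<in> Meas \<Longrightarrow> c \<in> Meas \<Longrightarrow> \<delta> a c \<le> \<delta> a b + \<delta> b c"
  unfolding metric_on_Meas_def by (drule conjunct2, drule conjunct2) (drule bspec, assumption, drule bspec, assumption, drule bspec, assumption, simp)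

lemma dir1:
  fixes \<delta> :: "complex measure \<Rightarrow> complex measure \<Rightarrow> real"
  assumes met: "metric_on_Meas \<delta>"
    and H: "\<forall>\<nu>\<in>Meas. \<forall>\<epsilon> :: nat \<Rightarrow> real. (\<forall>n. \<epsilon> n > 0) \<and> \<epsilon> \<longlonglongrightarrow> 0 \<longrightarrow>
            (\<lambda>n. diam_delta \<delta> (uncert (moment \<nu>) n (\<epsilon> n))) \<longlonglongrightarrow> 0"
  shows "weakly_continuous \<delta>"
proof -
  have small: "\<exists>n e. 0 < e \<and> diam_delta \<delta> (uncert (moment \<nu>) n e) < ereal \<eta>"
    if nu: "\<nu> \<in> Meas" and eta: "0 < \<eta>" for \<nu> \<eta>
  proof (rule ccontr)
    assume A: "\<not> ?thesis"
    define e :: "nat \<Rightarrow> real" where "e = (\<lambda>n. inverse (real (Suc n)))"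
    have "\<forall>n. e n > 0" unfolding e_def by simp
    moreover have "e \<longlonglongrightarrow> 0" unfolding e_def by (rule LIMSEQ_inverse_real_of_nat)
    ultimately have "(\<lambda>n. diam_delta \<delta> (uncert (moment \<nu>) n (e n))) \<longlonglongrightarrow> 0"
      using H nu by blast
    moreover have "(0::ereal) < ereal \<eta>" using eta by simp
    ultimately have "eventually (\<lambda>n. diam_delta \<delta> (uncert (moment \<nu>) n (e n)) < ereal \<eta>) sequentially"
      by (rule order_tendstoD(2))
    then obtain N where "diam_delta \<delta> (uncert (moment \<nu>) N (e N)) < ereal \<eta>"
      unfolding eventually_sequentially by blast
    moreover have "0 < e N" unfolding e_def by simp
    ultimately show False using A by blast
  qed
  have near: "\<delta> a a' < \<eta>" if a: "a \<in> Meas" and eta: "0 < \<eta>" and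
      W: "a' \<in> uncert (moment a) n e" and d: "diam_delta \<delta> (uncert (moment a) n e) < ereal \<eta>" and e: "0 < e"
    for a a' \<eta> n e
  proof -
    have "ereal (\<delta> a a') \<le> diam_delta \<delta> (uncert (moment a) n e)"
      by (rule diam_upper[OF uncert_self[OF a e] W])
    then have "ereal (\<delta> a a') < ereal \<eta>" using d by (rule le_less_trans)
    then show ?thesis by simp
  qed
  have nbhd: "\<exists>W. openin weak_top W \<and> a \<in> W \<and> (\<forall>a'\<in>W. a' \<in> Meas \<and> \<delta> a a' < \<eta>)"
    if a: "a \<in> Meas" and eta: "0 < \<eta>" for a \<eta>
  proof -
    obtain n e where ne: "0 < e" "diam_delta \<delta> (uncert (moment a) n e) < ereal \<eta>"
      using small[OF a eta] by blast
    obtain W where W: "openin weak_top W" "a \<in> W" "W \<subseteq> uncert (moment a) n e"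
      using lemmaC[OF a ne(1)] by blast
    have "\<forall>a'\<in>W. a' \<in> Meas \<and> \<delta> a a' < \<eta>"
    proof
      fix a' assume "a' \<in> W"
      then have a': "a' \<in> uncert (moment a) n e" using W(3) by blast
      show "a' \<in> Meas \<and> \<delta> a a' < \<eta>" using uncert_Meas[OF a'] near[OF a eta a' ne(2) ne(1)] by simp
    qed
    then show ?thesis using W by blast
  qed
  show ?thesis
    unfolding weakly_continuous_def continuous_map_def
  proof (intro conjI allI impI)
    show "(\<lambda>p. \<delta> (fst p) (snd p)) \<in> topspace (prod_topology weak_top weak_top) \<rightarrow> topspace euclideanreal"
      by simp
  next
    fix U :: "real set" assume "openin euclideanreal U"
    then have U: "open U" by (simp only: open_openin)
    show "openin (prod_topology weak_top weak_top)
            {x \<in> topspace (prod_topology weak_top weak_top). \<delta> (fst x) (snd x) \<in> U}"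
      (is "openin _ ?P")
    proof (subst openin_subopen, intro ballI)
      fix p assume p: "p \<in> ?P"
      obtain a b where ab: "p = (a, b)" by (cases p)
      have a: "a \<in> Meas" and b: "b \<in> Meas" and dU: "\<delta> a b \<in> U"
        using p ab by (auto simp: topspace_weak)
      obtain \<eta> where eta: "0 < \<eta>" "ball (\<delta> a b) \<eta> \<subseteq> U" by (rule openE[OF U dU])
      have eta2: "0 < \<eta> / 2" using eta by simp
      obtain W1 where W1: "openin weak_top W1" "a \<in> W1" "\<forall>a'\<in>W1. a' \<in> Meas \<and> \<delta> a a' < \<eta>/2"
        using nbhd[OF a eta2] by blast
      obtain W2 where W2: "openin weak_top W2" "b \<in> W2" "\<forall>b'\<in>W2. b' \<in> Meas \<and> \<delta> b b' < \<eta>/2"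
        using nbhd[OF b eta2] by blast
      have "W1 \<times> W2 \<subseteq> ?P"
      proof
        fix q assume q: "q \<in> W1 \<times> W2"
        obtain a' b' where qq: "q = (a', b')" by (cases q)
        have a': "a' \<in> Meas" "\<delta> a a' < \<eta>/2" using W1(3) q qq by auto
        have b': "b' \<in> Meas" "\<delta> b b' < \<eta>/2" using W2(3) q qq by auto
                have t1: "\<delta> a' b' \<le> \<delta> a' a + \<delta> a b'" by (rule mf3[OF met a'(1) a b'(1)])
        have t2: "\<delta> a b' \<le> \<delta> a b + \<delta> b b'" by (rule mf3[OF met a b b'(1)])
        have t3: "\<delta> a b \<le> \<delta> a a' + \<delta> a' b" by (rule mf3[OF met a a'(1) b])
        have t4: "\<delta> a' b \<le> \<delta> a' b' + \<delta> b' b" by (rule mf3[OF met a'(1) b'(1) b])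
        have s1: "\<delta> a' a = \<delta> a a'" by (rule mf2[OF met a'(1) a])
        have s2: "\<delta> b' b = \<delta> b b'" by (rule mf2[OF met b'(1) b])
        have "\<bar>\<delta> a' b' - \<delta> a b\<bar> < \<eta>" using t1 t2 t3 t4 s1 s2 a'(2) b'(2) by linarith
        then have "\<delta> a' b' \<in> ball (\<delta> a b) \<eta>" by (simp add: dist_real_def abs_minus_commute)
        then have "\<delta> a' b' \<in> U" using eta(2) by blast
        then show "q \<in> ?P" using qq a'(1) b'(1) by (simp add: topspace_weak)
      qed
      moreover have "openin (prod_topology weak_top weak_top) (W1 \<times> W2)"
        using W1(1) W2(1) by (simp add: openin_prod_Times_iff)
      moreover have "p \<in> W1 \<times> W2" using ab W1(2) W2(2) by simp
      ultimately show "\<exists>T. openin (prod_topology weak_top weak_top) T \<and> p \<in> T \<and> T \<subseteq> ?P" by blast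
    qed
  qed
qed

lemma dir2:
  fixes \<delta> :: "complex measure \<Rightarrow> complex measure \<Rightarrow> real"
  assumes met: "metric_on_Meas \<delta>" and wc: "weakly_continuous \<delta>"
    and nu: "\<nu> \<in> Meas" and epos: "\<forall>n. \<epsilon> n > 0" and elim: "\<epsilon> \<longlonglongrightarrow> 0"
  shows "(\<lambda>n. diam_delta \<delta> (uncert (moment \<nu>) n (\<epsilon> n))) \<longlonglongrightarrow> 0"
proof -
  have key: "\<exists>N e0. 0 < e0 \<and> diam_delta \<delta> (uncert (moment \<nu>) N e0) \<le> ereal \<eta>" if eta: "0 < \<eta>" for \<eta>
  proof -
    define P where "P = {x \<in> topspace (prod_topology weak_top weak_top). \<delta> (fst x) (snd x) \<in> {..<\<eta>}}"
    have oe: "openin euclideanreal {..<\<eta>}" using open_lessThan[of \<eta>] by (simp only: open_openin)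
    have cm: "continuous_map (prod_topology weak_top weak_top) euclideanreal (\<lambda>p. \<delta> (fst p) (snd p))"
      using wc unfolding weakly_continuous_def .
    have op: "openin (prod_topology weak_top weak_top) P"
      unfolding P_def by (rule openin_continuous_map_preimage[OF cm oe])
    have mem: "(\<nu>, \<nu>) \<in> P"
      unfolding P_def using nu eta mf1[OF met nu] by (simp add: topspace_weak)
    have all: "\<forall>x y. (x,y) \<in> P \<longrightarrow> (\<exists>U V. openin weak_top U \<and> openin weak_top V \<and> x \<in> U \<and> y \<in> V \<and> U \<times> V \<subseteq> P)"
      using op by (simp only: openin_prod_topology_alt)
    obtain U V where UV: "openin weak_top U" "openin weak_top V" "\<nu> \<in> U" "\<nu> \<in> V" "U \<times> V \<subseteq> P"
      using all[rule_format, OF mem] by blast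
    obtain n1 e1 where 1: "0 < e1" "uncert (moment \<nu>) n1 e1 \<subseteq> U" using lemmaA[OF UV(1) UV(3)] by blast
    obtain n2 e2 where 2: "0 < e2" "uncert (moment \<nu>) n2 e2 \<subseteq> V" using lemmaA[OF UV(2) UV(4)] by blast
    define N where "N = max n1 n2"
    define e0 where "e0 = min e1 e2"
    have sU: "uncert (moment \<nu>) N e0 \<subseteq> U"
      using 1(2) uncert_mono[of n1 N e0 e1] unfolding N_def e0_def by auto
    have sV: "uncert (moment \<nu>) N e0 \<subseteq> V"
      using 2(2) uncert_mono[of n2 N e0 e2] unfolding N_def e0_def by auto
    have "diam_delta \<delta> (uncert (moment \<nu>) N e0) \<le> ereal \<eta>"
    proof (rule diam_least)
      fix a b assume "a \<in> uncert (moment \<nu>) N e0" "b \<in> uncert (moment \<nu>) N e0"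
      then have "(a, b) \<in> U \<times> V" using sU sV by blast
      then have "(a, b) \<in> P" using UV(5) by blast
      then show "\<delta> a b \<le> \<eta>" unfolding P_def by simp
    qed
    moreover have "0 < e0" unfolding e0_def using 1 2 by simp
    ultimately show ?thesis by blast
  qed
  show ?thesis
  proof (rule order_tendstoI)
    fix a :: ereal assume a: "a < 0"
    have "a < diam_delta \<delta> (uncert (moment \<nu>) n (\<epsilon> n))" for n
    proof -
      have "ereal (\<delta> \<nu> \<nu>) \<le> diam_delta \<delta> (uncert (moment \<nu>) n (\<epsilon> n))"
        by (rule diam_upper[OF uncert_self[OF nu epos[rule_format, of n]] uncert_self[OF nu epos[rule_format, of n]]])
      then have "(0::ereal) \<le> diam_delta \<delta> (uncert (moment \<nu>) n (\<epsilon> n))"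
        using mf1[OF met nu] by (simp add: zero_ereal_def)
      then show ?thesis by (rule less_le_trans[OF a])
    qed
    then show "eventually (\<lambda>n. a < diam_delta \<delta> (uncert (moment \<nu>) n (\<epsilon> n))) sequentially" by simp
  next
    fix a :: ereal assume a: "0 < a"
    obtain z where z: "0 < ereal z" "ereal z < a" using ereal_dense2[OF a] by blast
    have z0: "0 < z" using z(1) by simp
    obtain N e0 where Ne: "0 < e0" "diam_delta \<delta> (uncert (moment \<nu>) N e0) \<le> ereal z"
      using key[OF z0] by blast
    have "eventually (\<lambda>n. \<epsilon> n < e0) sequentially" using elim Ne(1) by (rule order_tendstoD(2))
    moreover have "eventually (\<lambda>n. N \<le> n) sequentially" by (rule eventually_ge_at_top)
    ultimately show "eventually (\<lambda>n. diam_delta \<delta> (uncert (moment \<nu>) n (\<epsilon> n)) < a) sequentially"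
    proof (rule eventually_elim2)
      fix n assume n: "\<epsilon> n < e0" "N \<le> n"
      have "diam_delta \<delta> (uncert (moment \<nu>) n (\<epsilon> n)) \<le> diam_delta \<delta> (uncert (moment \<nu>) N e0)"
        using n by (intro diam_mono uncert_mono) auto
      also have "\<dots> \<le> ereal z" by (rule Ne(2))
      also have "\<dots> < a" by (rule z(2))
      finally show "diam_delta \<delta> (uncert (moment \<nu>) n (\<epsilon> n)) < a" .
    qed
  qed
qed

theorem theorem1:
  fixes \<delta> :: "complex measure \<Rightarrow> complex measure \<Rightarrow> real"
  assumes "metric_on_Meas \<delta>"
  shows "(\<forall>\<nu>\<in>Meas. \<forall>\<epsilon> :: nat \<Rightarrow> real. (\<forall>n. \<epsilon> n > 0) \<and> \<epsilon> \<longlonglongrightarrow> 0 \<longrightarrow>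
            (\<lambda>n. diam_delta \<delta> (uncert (moment \<nu>) n (\<epsilon> n))) \<longlonglongrightarrow> 0)
         \<longleftrightarrow> weakly_continuous \<delta>"
proof
  assume "\<forall>\<nu>\<in>Meas. \<forall>\<epsilon> :: nat \<Rightarrow> real. (\<forall>n. \<epsilon> n > 0) \<and> \<epsilon> \<longlonglongrightarrow> 0 \<longrightarrow>
            (\<lambda>n. diam_delta \<delta> (uncert (moment \<nu>) n (\<epsilon> n))) \<longlonglongrightarrow> 0"
  then show "weakly_continuous \<delta>" by (rule dir1[OF assms])
next
  assume wc: "weakly_continuous \<delta>"
  show "\<forall>\<nu>\<in>Meas. \<forall>\<epsilon> :: nat \<Rightarrow> real. (\<forall>n. \<epsilon> n > 0) \<and> \<epsilon> \<longlonglongrightarrow> 0 \<longrightarrow>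
            (\<lambda>n. diam_delta \<delta> (uncert (moment \<nu>) n (\<epsilon> n))) \<longlonglongrightarrow> 0"
  proof (intro ballI allI impI)
    fix \<nu> and \<epsilon> :: "nat \<Rightarrow> real"
    assume "\<nu> \<in> Meas" "(\<forall>n. \<epsilon> n > 0) \<and> \<epsilon> \<longlonglongrightarrow> 0"
    then show "(\<lambda>n. diam_delta \<delta> (uncert (moment \<nu>) n (\<epsilon> n))) \<longlonglongrightarrow> 0"
      using dir2[OF assms wc] by blast
  qed
qed

end
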